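(* Let $n\ge1$, $f\in A_{\vec 0}(\mathbb{D}^n)$ and $\alpha\in\mathbb{C}\setminus\{0\}$. Then no non-zero positive measure $\mu\in A_{\vec 0}(\mathbb{D}^n)^\perp$ has support contained in the level set $\{z\in\mathbb{T}^n: f(z)=\alpha\}$.
   Context: $A(\mathbb{D}^n)$ is the polydisc algebra (continuous on $\overline{\mathbb{D}}^n$, holomorphic on $\mathbb{D}^n$), regarded as a subspace of $C(\mathbb{T}^n)$. $A_{\vec 0}(\mathbb{D}^n)=\{z_1\cdots z_n f(z): f\in A(\mathbb{D}^n)\}$. $A_{\vec 0}(\mathbb{D}^n)^\perp$ is the set of complex Borel measures $\mu$ of bounded variation on $\mathbb{T}^n$ with $\int_{\mathbb{T}^n} g\,d\mu=0$ for all $g\in A_{\vec 0}(\mathbb{D}^n)$. *)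

theory Defs
  imports "HOL-Analysis.Analysis"
begin

text \<open>Points of C^n are vectors complex ^ 'n, with 'n a finite (nonempty) index type, so n = CARD('n) \<ge> 1.\<close>

definition torus :: "(complex ^ 'n::finite) set" where
  "torus = {z. \<forall>i. norm (z $ i) = 1}"

definition open_polydisc :: "(complex ^ 'n::finite) set" where
  "open_polydisc = {z. \<forall>i. norm (z $ i) < 1}"

definition closed_polydisc :: "(complex ^ 'n::finite) set" where
  "closed_polydisc = {z. \<forall>i. norm (z $ i) \<le> 1}"

text \<open>Holomorphic in several variables: (real) Frechet differentiable with a complex-linear derivative.\<close>
definition holomorphic_n :: "(complex ^ 'n::finite \<Rightarrow> complex) \<Rightarrow> (complex ^ 'n) set \<Rightarrow> bool" where
  "holomorphic_n f S \<longleftrightarrow>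
     (\<forall>z\<in>S. \<exists>c :: complex ^ 'n. (f has_derivative (\<lambda>h. \<Sum>i\<in>UNIV. c $ i * h $ i)) (at z))"

definition polydisc_algebra :: "(complex ^ 'n::finite \<Rightarrow> complex) set" where
  "polydisc_algebra = {f. continuous_on closed_polydisc f \<and> holomorphic_n f open_polydisc}"

definition polydisc_algebra0 :: "(complex ^ 'n::finite \<Rightarrow> complex) set" where
  "polydisc_algebra0 = {f. \<exists>g\<in>polydisc_algebra. \<forall>z. f z = (\<Prod>i\<in>UNIV. z $ i) * g z}"

definition borel_measure_on_torus :: "(complex ^ 'n::finite) measure \<Rightarrow> bool" where
  "borel_measure_on_torus M \<longleftrightarrow>
     sets M = sets (restrict_space borel (torus :: (complex ^ 'n) set)) \<and> finite_measure M"

definition annihilates_A0 :: "(complex ^ 'n::finite) measure \<Rightarrow> bool" where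
  "annihilates_A0 M \<longleftrightarrow> (\<forall>g\<in>polydisc_algebra0. integral\<^sup>L M g = 0)"

definition msupport :: "'a::metric_space measure \<Rightarrow> 'a set" where
  "msupport M = {z \<in> space M. \<forall>e>0. emeasure M (ball z e \<inter> space M) \<noteq> 0}"

end

theory Submission
  imports Defs
begin

lemma support_ae:
  fixes M :: "(complex ^ 'n::finite) measure"
  assumes opsets: "\<And>S. open S \<Longrightarrow> S \<inter> space M \<in> sets M"
  shows "AE x in M. x \<in> msupport M"
proof -
  define F where "F = {ball x e | x e. x \<in> space M \<and> e > 0 \<and> emeasure M (ball x e \<inter> space M) = 0}"
  have opF: "\<And>S. S \<in> F \<Longrightarrow> open S" unfolding F_def by auto
  obtain F' where F': "F' \<subseteq> F" "countable F'" "\<Union>F' = \<Union>F" using Lindelof[OF opF] by metis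
  have null: "(\<Union>S\<in>F'. S \<inter> space M) \<in> null_sets M"
  proof (rule null_sets_UN')
    show "countable F'" by fact
    fix S assume "S \<in> F'"
    then have "S \<in> F" using F' by auto
    then obtain x e where S: "S = ball x e" "emeasure M (ball x e \<inter> space M) = 0"
      unfolding F_def by auto
    have "ball x e \<inter> space M \<in> sets M"
      using opsets by auto
    then show "S \<inter> space M \<in> null_sets M" using S by auto
  qed
  show ?thesis
  proof (rule AE_I'[OF null])
    show "{x \<in> space M. x \<notin> msupport M} \<subseteq> (\<Union>S\<in>F'. S \<inter> space M)"
    proof
      fix x assume x: "x \<in> {x \<in> space M. x \<notin> msupport M}"
      then obtain e where e: "e > 0" "emeasure M (ball x e \<inter> space M) = 0"
        unfolding msupport_def by auto
      then have "ball x e \<in> F" using x unfolding F_def by auto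
      then have "x \<in> \<Union>F" using e(1) by (meson UnionI centre_in_ball)
      then have "x \<in> \<Union>F'" using F'(3) by simp
      then show "x \<in> (\<Union>S\<in>F'. S \<inter> space M)" using x by auto
    qed
  qed
qed


theorem mainTheorem2:
  fixes f :: "complex ^ 'n::finite \<Rightarrow> complex" and \<alpha> :: complex
  assumes "f \<in> polydisc_algebra0" and "\<alpha> \<noteq> 0"
  shows "\<not> (\<exists>M :: (complex ^ 'n) measure.
            borel_measure_on_torus M \<and> emeasure M (space M) \<noteq> 0 \<and> annihilates_A0 M \<and>
            msupport M \<subseteq> {z \<in> torus. f z = \<alpha>})"
proof
  assume "\<exists>M :: (complex ^ 'n) measure.
            borel_measure_on_torus M \<and> emeasure M (space M) \<noteq> 0 \<and> annihilates_A0 M \<and>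
            msupport M \<subseteq> {z \<in> torus. f z = \<alpha>}"
  then obtain M :: "(complex ^ 'n) measure" where
    bm: "borel_measure_on_torus M" and nz: "emeasure M (space M) \<noteq> 0"
    and ann: "annihilates_A0 M" and supp: "msupport M \<subseteq> {z \<in> torus. f z = \<alpha>}" by blast
  have setsM: "sets M = sets (restrict_space borel (torus :: (complex ^ 'n) set))"
    and fin: "finite_measure M" using bm unfolding borel_measure_on_torus_def by auto
  have spM: "space M = torus"
    using sets_eq_imp_space_eq[OF setsM] by (simp add: space_restrict_space)
  have opsets: "\<And>S. open S \<Longrightarrow> S \<inter> space M \<in> sets M"
  proof -
    fix S :: "(complex ^ 'n) set" assume "open S"
    then have "S \<in> sets borel" by auto
    then have "torus \<inter> S \<in> (\<inter>) torus ` sets borel" by blast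
    then show "S \<inter> space M \<in> sets M" unfolding setsM spM sets_restrict_space by (simp add: Int_commute)
  qed
  have ae: "AE x in M. f x = \<alpha>"
    using support_ae[OF opsets] supp by (auto elim!: AE_mp)
  obtain g where g: "g \<in> polydisc_algebra" "\<And>z. f z = (\<Prod>i\<in>UNIV. z $ i) * g z"
    using assms(1) unfolding polydisc_algebra0_def by auto
  have "continuous_on closed_polydisc g" using g(1) unfolding polydisc_algebra_def by auto
  moreover have "continuous_on closed_polydisc (\<lambda>z::complex^'n. \<Prod>i\<in>UNIV. z $ i)"
    by (intro continuous_intros)
  ultimately have "continuous_on closed_polydisc f"
    using continuous_on_mult g(2) by (metis (no_types, lifting) continuous_on_cong)
  moreover have "torus \<subseteq> (closed_polydisc :: (complex ^ 'n) set)"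
    unfolding torus_def closed_polydisc_def by auto
  ultimately have "continuous_on torus f" using continuous_on_subset by blast
  then have fm: "f \<in> borel_measurable M"
    using borel_measurable_continuous_on_restrict measurable_cong_sets[OF setsM refl] by blast
  have "integral\<^sup>L M f = integral\<^sup>L M (\<lambda>_. \<alpha>)"
    by (rule integral_cong_AE[OF fm _ ae]) simp
  also have "\<dots> = measure M (space M) *\<^sub>R \<alpha>" by simp
  finally have i: "integral\<^sup>L M f = measure M (space M) *\<^sub>R \<alpha>" .
  have "integral\<^sup>L M f = 0" using ann assms(1) unfolding annihilates_A0_def by auto
  with i assms(2) have "measure M (space M) = 0" by simp
  then have "emeasure M (space M) = 0"
    using fin finite_measure.emeasure_eq_measure by (metis ennreal_0)
  with nz show False by simp
qed

end
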